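(* Let $F$ be an admissible fundamental matrix on $J$. Then there is a constant $C>0$ such that \[ \|\alpha_F^k(a,g)\|_{L^\infty(-1,1)}\le C\|g\|_Y \] for all $(a,g)\in J\times Y$ and all $k\in\{1,2,3,4\}$.
   Context: Notation: $A^j{}_k$ is the entry in row $j$, column $k$; a prime denotes $\partial_y$; $\varphi(y,\alpha):=-\frac{2\alpha}{(1-y)^2}+\frac{2\alpha}{1-y}-\frac{2}{\alpha}\log(1-y)$; each occurrence of $\mathcal P(y)$ denotes some polynomial in $y$ with complex coefficients independent of $a$ (different occurrences may differ). Let $a_*\in\mathbb{R}\setminus\{0\}$, $J\subset\mathbb{R}\setminus\{-a_*\}$ compact. An admissible right fundamental matrix $F_R(y,a)$, $(y,a)\in[0,1)\times J$, is the real $4\times4$ matrix with $j$-th column $(\Re f_j,\Im f_j,\Re f_j',\Im f_j')^T(y,a)$, where $\det F_R\neq0$ on $[0,1)\times J$ and $f_1=1+\frac{a_*+a+i}{2(a_*+a)}(1-y)+(1-y)^2\mathcal P(y)$, $f_2=i+i\frac{a_*+a+i}{2(a_*+a)}(1-y)+(1-y)^2\mathcal P(y)$, $f_3=e^{i\varphi(y,a_*+a)}(1-y)[1+\frac{2(a_*+a)-i}{2(a_*+a)}(1-y)+(1-y)^2\mathcal P(y)]+e^{-i\varphi(y,a_*+a)}(1-y)^5\mathcal P(y)$, $f_4=i\times$(the same expression with possibly different polynomials). An admissible left fundamental matrix $F_L(y)$, $y\in(-1,0]$, is the real $4\times4$ matrix with columns $(\Re g_j,\Im g_j,\Re g_j',\Im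 g_j')^T$, $\det F_L\neq0$ on $(-1,0]$, $g_1=1+(1+y)\mathcal P(y)$, $g_2=i+(1+y)\mathcal P(y)$, $g_3=\frac{1}{1+y}[1+(1+y)\mathcal P(y)]$, $g_4=\frac{i}{1+y}[1+(1+y)\mathcal P(y)]$. With $M_F(a):=F_L(0)^{-1}F_R(0,a)$, the admissible fundamental matrix on $J$ is $F(y,a):=F_L(y)M_F(a)$ for $y\in(-1,0]$, $F(y,a):=F_R(y,a)$ for $y\in(0,1)$, assuming $M_F(a)^3{}_1\neq0$ for all $a\in J$. $Y$ is the space of $f\in C(-1,1)$ with $(1+y)(1-y)^2f(y)$ extending continuously to $[-1,1]$, $\|f\|_Y:=\sup_{(-1,1)}(1+y)(1-y)^2|f(y)|$. For $g\in Y$, $a\in J$, $y\in(-1,1)$: $\alpha_F^k(a,g)(y):=F^{-1}(y,a)^k{}_3\Re g(y)+F^{-1}(y,a)^k{}_4\Im g(y)$, where $F^{-1}(y,a)^k{}_\ell$ denotes the $(k,\ell)$ entry of $F(y,a)^{-1}$. *)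

theory Defs
  imports "HOL-Analysis.Analysis" "HOL-Computational_Algebra.Polynomial"
begin

definition phi :: "real \<Rightarrow> real \<Rightarrow> real" where
  "phi y al = - 2 * al / (1 - y)^2 + 2 * al / (1 - y) - (2 / al) * ln (1 - y)"

definition colvec :: "(real \<Rightarrow> complex) \<Rightarrow> real \<Rightarrow> real^4" where
  "colvec f y = vector [Re (f y), Im (f y), deriv (\<lambda>t. Re (f t)) y, deriv (\<lambda>t. Im (f t)) y]"

definition fundmat :: "(real \<Rightarrow> complex) \<Rightarrow> (real \<Rightarrow> complex) \<Rightarrow> (real \<Rightarrow> complex)
    \<Rightarrow> (real \<Rightarrow> complex) \<Rightarrow> real \<Rightarrow> real^4^4" where
  "fundmat f1 f2 f3 f4 y = transpose (vector [colvec f1 y, colvec f2 y, colvec f3 y, colvec f4 y])"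

definition fR1 :: "real \<Rightarrow> (nat \<Rightarrow> complex poly) \<Rightarrow> real \<Rightarrow> real \<Rightarrow> complex" where
  "fR1 as P a y = (let al = complex_of_real (as + a) in
     1 + (al + \<i>) / (2 * al) * of_real (1 - y) + of_real ((1 - y)^2) * poly (P 1) (of_real y))"

definition fR2 :: "real \<Rightarrow> (nat \<Rightarrow> complex poly) \<Rightarrow> real \<Rightarrow> real \<Rightarrow> complex" where
  "fR2 as P a y = (let al = complex_of_real (as + a) in
     \<i> + \<i> * (al + \<i>) / (2 * al) * of_real (1 - y) + of_real ((1 - y)^2) * poly (P 2) (of_real y))"

definition fR34 :: "real \<Rightarrow> complex poly \<Rightarrow> complex poly \<Rightarrow> real \<Rightarrow> real \<Rightarrow> complex" where
  "fR34 as p q a y = (let al = complex_of_real (as + a) in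
     cis (phi y (as + a)) * of_real (1 - y) *
       (1 + (2 * al - \<i>) / (2 * al) * of_real (1 - y) + of_real ((1 - y)^2) * poly p (of_real y))
     + cis (- phi y (as + a)) * of_real ((1 - y)^5) * poly q (of_real y))"

definition fR3 :: "real \<Rightarrow> (nat \<Rightarrow> complex poly) \<Rightarrow> real \<Rightarrow> real \<Rightarrow> complex" where
  "fR3 as P a y = fR34 as (P 3) (P 4) a y"

definition fR4 :: "real \<Rightarrow> (nat \<Rightarrow> complex poly) \<Rightarrow> real \<Rightarrow> real \<Rightarrow> complex" where
  "fR4 as P a y = \<i> * fR34 as (P 5) (P 6) a y"

definition FR :: "real \<Rightarrow> (nat \<Rightarrow> complex poly) \<Rightarrow> real \<Rightarrow> real \<Rightarrow> real^4^4" where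
  "FR as P y a = fundmat (fR1 as P a) (fR2 as P a) (fR3 as P a) (fR4 as P a) y"

definition gL1 :: "(nat \<Rightarrow> complex poly) \<Rightarrow> real \<Rightarrow> complex" where
  "gL1 Q y = 1 + of_real (1 + y) * poly (Q 1) (of_real y)"
definition gL2 :: "(nat \<Rightarrow> complex poly) \<Rightarrow> real \<Rightarrow> complex" where
  "gL2 Q y = \<i> + of_real (1 + y) * poly (Q 2) (of_real y)"
definition gL3 :: "(nat \<Rightarrow> complex poly) \<Rightarrow> real \<Rightarrow> complex" where
  "gL3 Q y = 1 / of_real (1 + y) * (1 + of_real (1 + y) * poly (Q 3) (of_real y))"
definition gL4 :: "(nat \<Rightarrow> complex poly) \<Rightarrow> real \<Rightarrow> complex" where
  "gL4 Q y = \<i> / of_real (1 + y) * (1 + of_real (1 + y) * poly (Q 4) (of_real y))"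

definition FL :: "(nat \<Rightarrow> complex poly) \<Rightarrow> real \<Rightarrow> real^4^4" where
  "FL Q y = fundmat (gL1 Q) (gL2 Q) (gL3 Q) (gL4 Q) y"

definition MF :: "real \<Rightarrow> (nat \<Rightarrow> complex poly) \<Rightarrow> (nat \<Rightarrow> complex poly) \<Rightarrow> real \<Rightarrow> real^4^4" where
  "MF as P Q a = matrix_inv (FL Q 0) ** FR as P 0 a"

definition Ffund :: "real \<Rightarrow> (nat \<Rightarrow> complex poly) \<Rightarrow> (nat \<Rightarrow> complex poly) \<Rightarrow> real \<Rightarrow> real \<Rightarrow> real^4^4" where
  "Ffund as P Q y a = (if y \<le> 0 then FL Q y ** MF as P Q a else FR as P y a)"

definition admissible :: "real \<Rightarrow> real set \<Rightarrow> (nat \<Rightarrow> complex poly) \<Rightarrow> (nat \<Rightarrow> complex poly) \<Rightarrow> bool" where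
  "admissible as J P Q \<longleftrightarrow>
     as \<noteq> 0 \<and> compact J \<and> - as \<notin> J \<and>
     (\<forall>y \<in> {0..<1}. \<forall>a \<in> J. det (FR as P y a) \<noteq> 0) \<and>
     (\<forall>y \<in> {-1<..0}. det (FL Q y) \<noteq> 0) \<and>
     (\<forall>a \<in> J. MF as P Q a $ 3 $ 1 \<noteq> 0)"

definition Yspace :: "(real \<Rightarrow> complex) set" where
  "Yspace = {f. continuous_on {-1<..<1} f \<and>
     (\<exists>h. continuous_on {-1..1} h \<and>
          (\<forall>y \<in> {-1<..<1}. h y = of_real ((1 + y) * (1 - y)^2) * f y))}"

definition normY :: "(real \<Rightarrow> complex) \<Rightarrow> real" where
  "normY f = (SUP y \<in> {-1<..<1}. (1 + y) * (1 - y)^2 * cmod (f y))"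

definition alphaF :: "real \<Rightarrow> (nat \<Rightarrow> complex poly) \<Rightarrow> (nat \<Rightarrow> complex poly)
    \<Rightarrow> 4 \<Rightarrow> real \<Rightarrow> (real \<Rightarrow> complex) \<Rightarrow> real \<Rightarrow> real" where
  "alphaF as P Q k a g y =
     matrix_inv (Ffund as P Q y a) $ k $ 3 * Re (g y) + matrix_inv (Ffund as P Q y a) $ k $ 4 * Im (g y)"

end

theory Submission
  imports Defs
begin


lemma vector_4 [simp]:
 "(vector [x1,x2,x3,x4] ::('a::zero)^4)$1 = x1"
 "(vector [x1,x2,x3,x4] ::('a::zero)^4)$2 = x2"
 "(vector [x1,x2,x3,x4] ::('a::zero)^4)$3 = x3"
 "(vector [x1,x2,x3,x4] ::('a::zero)^4)$4 = x4"
  unfolding vector_def by simp_all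

lemma matrix_inv_props:
  fixes A :: "real^'n^'n"
  assumes "invertible A"
  shows "A ** matrix_inv A = mat 1" "matrix_inv A ** A = mat 1"
proof -
  have "\<exists>A'. A ** A' = mat 1 \<and> A' ** A = mat 1" using assms unfolding invertible_def by blast
  then have "A ** matrix_inv A = mat 1 \<and> matrix_inv A ** A = mat 1"
    unfolding matrix_inv_def by (rule someI_ex)
  then show "A ** matrix_inv A = mat 1" "matrix_inv A ** A = mat 1" by auto
qed

lemma matrix_inv_unique:
  fixes A X :: "real^'n^'n"
  assumes "A ** X = mat 1"
  shows "matrix_inv A = X" "invertible A"
proof -
  show inv: "invertible A" using assms invertible_right_inverse by blast
  have "matrix_inv A = matrix_inv A ** (A ** X)" using assms by simp
  also have "\<dots> = (matrix_inv A ** A) ** X" by (simp add: matrix_mul_assoc)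
  also have "\<dots> = X" using matrix_inv_props(2)[OF inv] by simp
  finally show "matrix_inv A = X" .
qed

lemma matrix_inv_mult:
  fixes A B :: "real^'n^'n"
  assumes "invertible A" "invertible B"
  shows "matrix_inv (A ** B) = matrix_inv B ** matrix_inv A"
proof (rule matrix_inv_unique(1))
  have "A ** B ** (matrix_inv B ** matrix_inv A) = A ** (B ** matrix_inv B) ** matrix_inv A"
    by (simp add: matrix_mul_assoc)
  also have "\<dots> = mat 1" using matrix_inv_props(1)[OF assms(1)] matrix_inv_props(1)[OF assms(2)] by simp
  finally show "A ** B ** (matrix_inv B ** matrix_inv A) = mat 1" .
qed

lemma matrix_inv_scale:
  fixes N :: "real^'n^'n"
  assumes "invertible N" "\<And>i. s i \<noteq> 0" "\<And>i. t i \<noteq> 0"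
  shows "matrix_inv (\<chi> i j. s i * N $ i $ j * t j) = (\<chi> k l. matrix_inv N $ k $ l / (t k * s l))"
    "invertible (\<chi> i j. s i * N $ i $ j * t j)"
proof -
  let ?A = "(\<chi> i j. s i * N $ i $ j * t j) :: real^'n^'n"
  let ?X = "(\<chi> k l. matrix_inv N $ k $ l / (t k * s l)) :: real^'n^'n"
  have NN: "N ** matrix_inv N = mat 1" using matrix_inv_props(1)[OF assms(1)] .
  have "?A ** ?X = mat 1"
  proof -
    have "(?A ** ?X) $ i $ l = (mat 1 :: real^'n^'n) $ i $ l" for i l
    proof -
      have "(?A ** ?X) $ i $ l = (\<Sum>j\<in>UNIV. s i * N $ i $ j * t j * (matrix_inv N $ j $ l / (t j * s l)))"
        by (simp add: matrix_matrix_mult_def)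
      also have "\<dots> = (s i / s l) * (\<Sum>j\<in>UNIV. N $ i $ j * matrix_inv N $ j $ l)"
        unfolding sum_distrib_left using assms(2,3) by (intro sum.cong) (auto simp: field_simps)
      also have "(\<Sum>j\<in>UNIV. N $ i $ j * matrix_inv N $ j $ l) = (N ** matrix_inv N) $ i $ l"
        by (simp add: matrix_matrix_mult_def)
      also have "\<dots> = (mat 1 :: real^'n^'n) $ i $ l" using NN by simp
      finally show ?thesis using assms(2) by (simp add: mat_def)
    qed
    then show ?thesis by (simp add: vec_eq_iff)
  qed
  then show "matrix_inv ?A = ?X" "invertible ?A" using matrix_inv_unique by auto
qed

lemma matrix_inv_cramer:
  fixes A :: "real^'n^'n"
  assumes "invertible A"
  shows "matrix_inv A $ k $ l = det (\<chi> i j. if j = k then (if i = l then 1 else 0) else A$i$j) / det A"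
proof -
  have d: "det A \<noteq> 0" using assms invertible_det_nz by blast
  let ?x = "(\<chi> k. matrix_inv A $ k $ l) :: real^'n"
  have "A *v ?x = (\<chi> i. if i = l then 1 else 0)"
  proof -
    have "(A *v ?x) $ i = (A ** matrix_inv A) $ i $ l" for i
      by (simp add: matrix_vector_mult_def matrix_matrix_mult_def)
    then show ?thesis using matrix_inv_props(1)[OF assms] by (simp add: vec_eq_iff mat_def)
  qed
  then have "?x = (\<chi> k. det(\<chi> i j. if j=k then (\<chi> i. if i = l then 1 else 0)$i else A$i$j) / det A)"
    using cramer[OF d] by blast
  then have "?x $ k = (\<chi> k. det(\<chi> i j. if j=k then (\<chi> i. if i = l then 1 else 0)$i else A$i$j) / det A) $ k"
    by simp
  then show ?thesis by (simp only: vec_lambda_beta)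
qed

lemma continuous_on_det:
  fixes M :: "'a::topological_space \<Rightarrow> real^'n^'n"
  assumes "continuous_on S M"
  shows "continuous_on S (\<lambda>p. det (M p))"
  unfolding det_def by (intro continuous_intros assms)

lemma bounded_inverse:
  fixes N :: "'a::metric_space \<Rightarrow> real^'n^'n"
  assumes "compact S" "continuous_on S N" "\<And>p. p \<in> S \<Longrightarrow> invertible (N p)"
  shows "\<exists>B. \<forall>p\<in>S. \<forall>k l. \<bar>matrix_inv (N p) $ k $ l\<bar> \<le> B"
proof -
  have eq: "\<forall>p\<in>S. matrix_inv (N p) = (\<chi> k l. det (\<chi> i j. if j = k then (if i = l then 1 else 0) else N p$i$j) / det (N p))"
    using matrix_inv_cramer assms(3) by (auto simp: vec_eq_iff)
  have nz: "\<forall>p\<in>S. det (N p) \<noteq> 0" using assms(3) invertible_det_nz by blast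
  have "continuous_on S (\<lambda>p. (\<chi> k l. det (\<chi> i j. if j = k then (if i = l then 1 else 0) else N p$i$j) / det (N p)) :: real^'n^'n)"
    apply (intro continuous_intros continuous_on_det nz)
    subgoal for k l i j by (cases "j = k") (auto intro!: continuous_intros assms(2))
    apply (intro assms(2))
    done
  then have "continuous_on S (\<lambda>p. matrix_inv (N p))" using continuous_on_eq eq by (smt (verit))
  then have "bounded ((\<lambda>p. matrix_inv (N p)) ` S)" using compact_continuous_image assms(1) compact_imp_bounded by blast
  then obtain B where B: "\<forall>p\<in>S. norm (matrix_inv (N p)) \<le> B" unfolding bounded_iff by auto
  have "\<bar>matrix_inv (N p) $ k $ l\<bar> \<le> B" if "p \<in> S" for p k l
  proof -
    have "\<bar>matrix_inv (N p) $ k $ l\<bar> \<le> norm (matrix_inv (N p) $ k)" by (rule component_le_norm_cart[simplified real_norm_def])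
    also have "\<dots> \<le> norm (matrix_inv (N p))" by (rule Finite_Cartesian_Product.norm_nth_le)
    finally show ?thesis using B that by auto
  qed
  then show ?thesis by blast
qed



definition Hc :: "complex \<Rightarrow> complex \<Rightarrow> complex poly \<Rightarrow> complex \<Rightarrow> complex" where
  "Hc k c p w = k + c * (1-w) + (1-w)^2 * poly p w"
definition Hcd :: "complex \<Rightarrow> complex poly \<Rightarrow> complex \<Rightarrow> complex" where
  "Hcd c p w = - c - 2*(1-w) * poly p w + (1-w)^2 * poly (pderiv p) w"
definition Phi0 :: "complex \<Rightarrow> complex \<Rightarrow> complex" where
  "Phi0 al v = -2*al/v^2 + 2*al/v - (2/al) * Ln v"
definition Phi0d :: "complex \<Rightarrow> complex \<Rightarrow> complex" where
  "Phi0d al v = 4*al/v^3 - 2*al/v^2 - (2/al)/v"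
definition Phi :: "complex \<Rightarrow> complex \<Rightarrow> complex" where
  "Phi al w = Phi0 al (1 - w)"
definition Phid :: "complex \<Rightarrow> complex \<Rightarrow> complex" where
  "Phid al w = - Phi0d al (1 - w)"
definition G34 :: "complex \<Rightarrow> complex \<Rightarrow> complex poly \<Rightarrow> complex poly \<Rightarrow> complex \<Rightarrow> complex" where
  "G34 al c p q w = exp(\<i> * Phi al w) * (1-w) * Hc 1 c p w + exp(-(\<i> * Phi al w)) * (1-w)^5 * poly q w"
definition G34d :: "complex \<Rightarrow> complex \<Rightarrow> complex poly \<Rightarrow> complex poly \<Rightarrow> complex \<Rightarrow> complex" where
  "G34d al c p q w = exp(\<i> * Phi al w) * (\<i> * Phid al w * (1-w) * Hc 1 c p w - Hc 1 c p w + (1-w) * Hcd c p w)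
     + exp(-(\<i> * Phi al w)) * (- \<i> * Phid al w * (1-w)^5 * poly q w - 5 * (1-w)^4 * poly q w + (1-w)^5 * poly (pderiv q) w)"

lemma Hc_deriv: "(Hc k c p has_field_derivative Hcd c p w) (at w)"
  unfolding Hc_def Hcd_def
  by (rule derivative_eq_intros refl | simp)+ (simp add: algebra_simps)

lemma Phi0_deriv: assumes "v \<notin> \<real>\<^sub>\<le>\<^sub>0" "al \<noteq> 0"
  shows "(Phi0 al has_field_derivative Phi0d al v) (at v)"
proof -
  have nz: "v \<noteq> 0" using assms by auto
  show ?thesis unfolding Phi0_def Phi0d_def
  apply (rule derivative_eq_intros refl | (use nz assms in simp; fail))+
  using nz assms
  apply (simp add: field_simps)
  apply algebra
  done
qed

lemma Phi_deriv: assumes "1 - w \<notin> \<real>\<^sub>\<le>\<^sub>0" "al \<noteq> 0"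
  shows "(Phi al has_field_derivative Phid al w) (at w)"
proof -
  have "((\<lambda>w. Phi0 al (1 - w)) has_field_derivative Phi0d al (1 - w) * (-1)) (at w)"
    by (rule DERIV_chain2[of "Phi0 al" _ "\<lambda>w. 1 - w", OF Phi0_deriv[OF assms]]) (rule derivative_eq_intros refl | simp)+
  then show ?thesis unfolding Phi_def[abs_def] Phid_def by simp
qed

lemma G34_deriv: assumes "1 - w \<notin> \<real>\<^sub>\<le>\<^sub>0" "al \<noteq> 0"
  shows "(G34 al c p q has_field_derivative G34d al c p q w) (at w)"
proof -
  show ?thesis
  unfolding G34_def G34d_def
  apply (rule derivative_eq_intros refl Phi_deriv[OF assms] Hc_deriv)+
  by (simp add: algebra_simps)
qed



definition sel4 :: "'a \<Rightarrow> 'a \<Rightarrow> 'a \<Rightarrow> 'a \<Rightarrow> 4 \<Rightarrow> 'a" where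
  "sel4 a b c d j = (if j = 1 then a else if j = 2 then b else if j = 3 then c else d)"

definition mkM :: "(4 \<Rightarrow> complex) \<Rightarrow> (4 \<Rightarrow> complex) \<Rightarrow> real^4^4" where
  "mkM v w = (\<chi> i j. if i = 1 then Re (v j) else if i = 2 then Im (v j) else if i = 3 then Re (w j) else Im (w j))"

lemma colvec_deriv:
  assumes "(f has_vector_derivative D) (at y)"
  shows "colvec f y = vector [Re (f y), Im (f y), Re D, Im D]"
proof -
  have "deriv (\<lambda>t. Re (f t)) y = Re D"
    by (rule DERIV_imp_deriv) (rule has_field_derivative_Re[OF assms])
  moreover have "deriv (\<lambda>t. Im (f t)) y = Im D"
    by (rule DERIV_imp_deriv) (rule has_field_derivative_Im[OF assms])
  ultimately show ?thesis unfolding colvec_def by simp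
qed

lemma fundmat_mkM:
  assumes "(f1 has_vector_derivative D1) (at y)" "(f2 has_vector_derivative D2) (at y)"
    "(f3 has_vector_derivative D3) (at y)" "(f4 has_vector_derivative D4) (at y)"
  shows "fundmat f1 f2 f3 f4 y = mkM (sel4 (f1 y) (f2 y) (f3 y) (f4 y)) (sel4 D1 D2 D3 D4)"
  unfolding fundmat_def mkM_def colvec_deriv[OF assms(1)] colvec_deriv[OF assms(2)]
    colvec_deriv[OF assms(3)] colvec_deriv[OF assms(4)]
  by (simp add: vec_eq_iff transpose_def forall_4 sel4_def)

lemma mkM_scale:
  "mkM v (\<lambda>j. of_real r * w j) = (\<chi> i j. (if i = 3 \<or> i = 4 then r else 1) * mkM v w $ i $ j * 1)"
  unfolding mkM_def by (simp add: vec_eq_iff forall_4)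



definition Psi :: "complex \<Rightarrow> real \<Rightarrow> complex" where
  "Psi al y = -4*al + 2*al* of_real(1-y) + (2/al)*(of_real(1-y))^2"

definition V34 :: "complex \<Rightarrow> complex \<Rightarrow> complex poly \<Rightarrow> complex poly \<Rightarrow> real \<Rightarrow> complex \<Rightarrow> complex" where
  "V34 al c p q y z = z * of_real(1-y) * Hc 1 c p (of_real y) + cnj z * (of_real(1-y))^5 * poly q (of_real y)"

definition W34 :: "complex \<Rightarrow> complex \<Rightarrow> complex poly \<Rightarrow> complex poly \<Rightarrow> real \<Rightarrow> complex \<Rightarrow> complex" where
  "W34 al c p q y z = z * (\<i> * Psi al y * Hc 1 c p (of_real y)
        + (of_real(1-y))^2 * (- Hc 1 c p (of_real y) + of_real(1-y) * Hcd c p (of_real y)))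
     + cnj z * (- \<i> * Psi al y * (of_real(1-y))^4 * poly q (of_real y) - 5 * (of_real(1-y))^6 * poly q (of_real y)
        + (of_real(1-y))^7 * poly (pderiv q) (of_real y))"

lemma Phi_real: assumes "y < 1" "al \<noteq> 0"
  shows "Phi (of_real al) (of_real y) = of_real (phi y al)"
proof -
  have "Ln (complex_of_real (1 - y)) = of_real (ln (1 - y))" using assms by (intro Ln_of_real) simp
  then show ?thesis unfolding Phi_def Phi0_def phi_def by simp
qed

lemma exp_Phi: assumes "y < 1" "al \<noteq> 0"
  shows "exp (\<i> * Phi (of_real al) (of_real y)) = cis (phi y al)"
        "exp (-(\<i> * Phi (of_real al) (of_real y))) = cnj (cis (phi y al))"
proof -
  show "exp (\<i> * Phi (of_real al) (of_real y)) = cis (phi y al)"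
    using Phi_real[OF assms] by (simp add: cis_conv_exp)
  have "cnj (cis (phi y al)) = cis (- phi y al)" by (rule cis_cnj)
  also have "\<dots> = exp (-(\<i> * of_real (phi y al)))" by (simp add: cis_conv_exp)
  finally show "exp (-(\<i> * Phi (of_real al) (of_real y))) = cnj (cis (phi y al))"
    using Phi_real[OF assms] by simp
qed

lemma fR34_eq: assumes "y < 1" "as + a \<noteq> 0"
  shows "fR34 as p q a y = G34 (of_real (as + a)) ((2 * of_real (as + a) - \<i>) / (2 * of_real (as + a))) p q (of_real y)"
  unfolding fR34_def G34_def Let_def exp_Phi[OF assms] Hc_def
  by (simp add: cis_cnj)

lemma fR34_eq_V: assumes "y < 1" "as + a \<noteq> 0"
  shows "fR34 as p q a y = V34 (of_real (as + a)) ((2 * of_real (as + a) - \<i>) / (2 * of_real (as + a))) p q y (cis (phi y (as + a)))"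
  unfolding fR34_def V34_def Let_def Hc_def
  by (simp add: cis_cnj)

lemma nonpos_aux: assumes "y < 1" shows "1 - complex_of_real y \<notin> \<real>\<^sub>\<le>\<^sub>0"
  using assms by (simp add: complex_nonpos_Reals_iff)

lemma fR34_deriv: assumes "y < 1" "as + a \<noteq> 0"
  shows "(fR34 as p q a has_vector_derivative
     G34d (of_real (as + a)) ((2 * of_real (as + a) - \<i>) / (2 * of_real (as + a))) p q (of_real y)) (at y)"
proof -
  let ?al = "complex_of_real (as + a)"
  let ?c = "(2 * ?al - \<i>) / (2 * ?al)"
  have "((\<lambda>x. G34 ?al ?c p q (of_real x)) has_vector_derivative G34d ?al ?c p q (of_real y)) (at y)"
  proof (rule has_vector_derivative_real_field, rule G34_deriv)
    show "1 - complex_of_real y \<notin> \<real>\<^sub>\<le>\<^sub>0" using assms nonpos_aux by auto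
    show "?al \<noteq> 0" using assms by (metis of_real_eq_0_iff)
  qed
  then show ?thesis
    by (rule has_vector_derivative_transform_within_open[where S="{..<1}"]) (use assms fR34_eq in auto)
qed

lemma Psi_alg: fixes v al :: complex assumes "v \<noteq> 0"
  shows "v^3 * (- (4*al/v^3 - 2*al/v^2 - (2/al)/v)) = -4*al + 2*al * v + (2/al) * v^2"
  using assms by (cases "al = 0") (simp_all add: field_simps power2_eq_square power3_eq_cube)

lemma G34d_scaled: assumes "y < 1" "al \<noteq> 0"
  shows "of_real ((1-y)^2) * G34d (of_real al) c p q (of_real y) = W34 (of_real al) c p q y (cis (phi y al))"
proof -
  have u: "complex_of_real (1 - y) \<noteq> 0" using assms by simp
  have "(of_real (1-y))^3 * Phid (of_real al) (of_real y) = Psi (of_real al) y"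
    unfolding Phid_def Phi0d_def Psi_def using Psi_alg[OF u, of "of_real al"] by simp
  then show ?thesis
    unfolding G34d_def W34_def exp_Phi[OF assms]
    by (simp add: algebra_simps power2_eq_square power3_eq_cube) algebra?
qed



definition NR :: "real \<Rightarrow> (nat \<Rightarrow> complex poly) \<Rightarrow> real \<Rightarrow> real \<Rightarrow> complex \<Rightarrow> real^4^4" where
  "NR as P y a z = (let al = complex_of_real (as + a); c1 = (al + \<i>) / (2 * al);
      c2 = \<i> * (al + \<i>) / (2 * al); c = (2 * al - \<i>) / (2 * al); U2 = complex_of_real ((1-y)^2) in
    mkM (sel4 (Hc 1 c1 (P 1) (of_real y)) (Hc \<i> c2 (P 2) (of_real y)) (V34 al c (P 3) (P 4) y z) (\<i> * V34 al c (P 5) (P 6) y z))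
        (sel4 (U2 * Hcd c1 (P 1) (of_real y)) (U2 * Hcd c2 (P 2) (of_real y)) (W34 al c (P 3) (P 4) y z) (\<i> * W34 al c (P 5) (P 6) y z)))"

lemma Hc_vderiv: "((\<lambda>t. Hc k c p (of_real t)) has_vector_derivative Hcd c p (of_real y)) (at y)"
  by (rule has_vector_derivative_real_field, rule Hc_deriv)

lemma fR1_eq: "fR1 as P a = (\<lambda>t. Hc 1 ((complex_of_real (as + a) + \<i>) / (2 * complex_of_real (as + a))) (P 1) (of_real t))"
  unfolding fR1_def Hc_def Let_def by (simp add: fun_eq_iff)

lemma fR2_eq: "fR2 as P a = (\<lambda>t. Hc \<i> (\<i> * (complex_of_real (as + a) + \<i>) / (2 * complex_of_real (as + a))) (P 2) (of_real t))"
  unfolding fR2_def Hc_def Let_def by (simp add: fun_eq_iff)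

lemma mkM_unscale: assumes "r \<noteq> 0"
  shows "mkM v w = (\<chi> i j. (if i = 3 \<or> i = 4 then 1 / r else 1) * mkM v (\<lambda>j. of_real r * w j) $ i $ j * 1)"
  unfolding mkM_def using assms by (simp add: vec_eq_iff forall_4)

lemma FR_NR: assumes "y < 1" "as + a \<noteq> 0"
  shows "FR as P y a = (\<chi> i j. (if i = 3 \<or> i = 4 then 1 / (1-y)^2 else 1) * NR as P y a (cis (phi y (as + a))) $ i $ j * 1)"
proof -
  let ?al = "complex_of_real (as + a)"
  let ?c = "(2 * ?al - \<i>) / (2 * ?al)"
  let ?c1 = "(?al + \<i>) / (2 * ?al)"
  let ?c2 = "\<i> * (?al + \<i>) / (2 * ?al)"
  let ?z = "cis (phi y (as + a))"
  have al: "as + a \<noteq> 0" by fact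
  have d1: "(fR1 as P a has_vector_derivative Hcd ?c1 (P 1) (of_real y)) (at y)"
    unfolding fR1_eq by (rule Hc_vderiv)
  have d2: "(fR2 as P a has_vector_derivative Hcd ?c2 (P 2) (of_real y)) (at y)"
    unfolding fR2_eq by (rule Hc_vderiv)
  have d3: "(fR3 as P a has_vector_derivative G34d ?al ?c (P 3) (P 4) (of_real y)) (at y)"
    unfolding fR3_def[abs_def] by (rule fR34_deriv[OF assms])
  have d4: "(fR4 as P a has_vector_derivative \<i> * G34d ?al ?c (P 5) (P 6) (of_real y)) (at y)"
    unfolding fR4_def[abs_def] by (rule has_vector_derivative_mult_right, rule fR34_deriv[OF assms])
  have r: "(1 - y)^2 \<noteq> 0" using assms by simp
  have FR: "FR as P y a = mkM (sel4 (fR1 as P a y) (fR2 as P a y) (fR3 as P a y) (fR4 as P a y))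
      (sel4 (Hcd ?c1 (P 1) (of_real y)) (Hcd ?c2 (P 2) (of_real y)) (G34d ?al ?c (P 3) (P 4) (of_real y))
          (\<i> * G34d ?al ?c (P 5) (P 6) (of_real y)))"
    unfolding FR_def by (rule fundmat_mkM[OF d1 d2 d3 d4])
  have NR: "NR as P y a ?z = mkM (sel4 (fR1 as P a y) (fR2 as P a y) (fR3 as P a y) (fR4 as P a y))
      (\<lambda>j. of_real ((1-y)^2) * sel4 (Hcd ?c1 (P 1) (of_real y)) (Hcd ?c2 (P 2) (of_real y)) (G34d ?al ?c (P 3) (P 4) (of_real y))
          (\<i> * G34d ?al ?c (P 5) (P 6) (of_real y)) j)"
  proof -
    have v: "sel4 (fR1 as P a y) (fR2 as P a y) (fR3 as P a y) (fR4 as P a y) =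
       sel4 (Hc 1 ?c1 (P 1) (of_real y)) (Hc \<i> ?c2 (P 2) (of_real y)) (V34 ?al ?c (P 3) (P 4) y ?z) (\<i> * V34 ?al ?c (P 5) (P 6) y ?z)"
      unfolding fR1_eq fR2_eq fR3_def fR4_def fR34_eq_V[OF assms] by simp
    have w: "(\<lambda>j. of_real ((1-y)^2) * sel4 (Hcd ?c1 (P 1) (of_real y)) (Hcd ?c2 (P 2) (of_real y)) (G34d ?al ?c (P 3) (P 4) (of_real y))
          (\<i> * G34d ?al ?c (P 5) (P 6) (of_real y)) j) =
        sel4 (of_real ((1-y)^2) * Hcd ?c1 (P 1) (of_real y)) (of_real ((1-y)^2) * Hcd ?c2 (P 2) (of_real y))
          (W34 ?al ?c (P 3) (P 4) y ?z) (\<i> * W34 ?al ?c (P 5) (P 6) y ?z)"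
      using G34d_scaled[OF assms(1) al, of ?c] by (auto simp: fun_eq_iff sel4_def algebra_simps)
    show ?thesis unfolding v w NR_def Let_def by simp
  qed
  show ?thesis unfolding FR NR by (rule mkM_unscale[OF r])
qed



lemma sel4_cont:
  assumes "continuous_on S A" "continuous_on S B" "continuous_on S C" "continuous_on S D"
  shows "continuous_on S (\<lambda>p. sel4 (A p) (B p) (C p) (D p) j)"
  using assms exhaust_4[of j] by (auto simp: sel4_def)

lemma mkM_cont:
  assumes "\<And>j. continuous_on S (\<lambda>p. v p j)" "\<And>j. continuous_on S (\<lambda>p. w p j)"
  shows "continuous_on S (\<lambda>p. mkM (v p) (w p))"
  unfolding mkM_def
  apply (intro continuous_on_vec_lambda)
  subgoal for i j
    using exhaust_4[of i] assms[of j]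
    by (elim disjE) (simp_all add: continuous_intros)
  done

lemma NR_cont:
  assumes "\<forall>a\<in>J. as + a \<noteq> 0"
  shows "continuous_on ({0..1} \<times> (J \<times> sphere 0 1)) (\<lambda>p. NR as P (fst p) (fst (snd p)) (snd (snd p)))"
proof -
  have nz: "\<forall>p\<in>{0..1} \<times> (J \<times> sphere 0 1). 2 * complex_of_real (as + fst (snd p)) \<noteq> 0"
    using assms by (auto simp del: of_real_add)
  have nz2: "\<forall>p\<in>{0..1} \<times> (J \<times> sphere 0 1). complex_of_real (as + fst (snd p)) \<noteq> 0"
    using assms by (auto simp del: of_real_add)
  show ?thesis
    unfolding NR_def Let_def
    apply (intro mkM_cont sel4_cont)
    unfolding V34_def W34_def Hc_def Hcd_def Psi_def
    apply (intro continuous_intros nz nz2)+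
    done
qed



lemma NR_at1:
  assumes "as + a \<noteq> 0" "cmod z = 1"
  shows "invertible (NR as P 1 a z)"
proof -
  let ?x = "Re z" and ?w = "Im z" and ?al = "as + a"
  have xw: "?x^2 + ?w^2 = 1" using assms(2) by (metis cmod_power2 power_one)
  have N: "NR as P 1 a z = (\<chi> i j. if i = 1 \<and> j = 1 then 1 else if i = 2 \<and> j = 2 then 1
      else if i = 3 \<and> j = 3 then 4 * ?al * ?w else if i = 3 \<and> j = 4 then 4 * ?al * ?x
      else if i = 4 \<and> j = 3 then - 4 * ?al * ?x else if i = 4 \<and> j = 4 then 4 * ?al * ?w else 0)"
    unfolding NR_def Let_def mkM_def V34_def W34_def Hc_def Hcd_def Psi_def
    by (simp add: vec_eq_iff forall_4 sel4_def algebra_simps)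
  let ?X = "(\<chi> i j. if i = 1 \<and> j = 1 then 1 else if i = 2 \<and> j = 2 then 1
      else if i = 3 \<and> j = 3 then ?w / (4 * ?al) else if i = 3 \<and> j = 4 then - ?x / (4 * ?al)
      else if i = 4 \<and> j = 3 then ?x / (4 * ?al) else if i = 4 \<and> j = 4 then ?w / (4 * ?al) else 0) :: real^4^4"
  have "NR as P 1 a z ** ?X = mat 1"
  proof -
    obtain b where b: "b = as + a" by blast
    have b0: "b \<noteq> 0" using assms(1) b by simp
    have e: "?w * ?w + ?x * ?x = 1" using xw by (simp add: power2_eq_square)
    show ?thesis
      unfolding N b[symmetric] using b0 e
      apply (simp add: vec_eq_iff forall_4 matrix_matrix_mult_def sum_4 mat_def field_simps)
      apply algebra
      done
  qed
  then show ?thesis using matrix_inv_unique(2) by blast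
qed



definition gfun :: "real \<Rightarrow> real \<times> real \<times> complex \<Rightarrow> real" where
  "gfun as p = (1 - fst p) * cmod (snd (snd p) - cis (phi (fst p) (as + fst (snd p))))"

lemma gfun_cont:
  assumes "\<forall>a\<in>J. as + a \<noteq> 0"
  shows "continuous_on ({0..1} \<times> (J \<times> sphere 0 1)) (gfun as)"
proof -
  let ?T = "{0..1::real} \<times> (J \<times> sphere (0::complex) 1)"
  let ?U = "{p :: real \<times> real \<times> complex. fst p < 1 \<and> as + fst (snd p) \<noteq> 0}"
  have oU: "open ?U"
    by (intro open_Collect_conj open_Collect_less open_Collect_neq continuous_intros)
  have cU: "continuous_on ?U (gfun as)"
    unfolding gfun_def phi_def
    by (intro continuous_intros) auto
  show ?thesis
    unfolding continuous_on_eq_continuous_within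
  proof
    fix x assume x: "x \<in> ?T"
    show "continuous (at x within ?T) (gfun as)"
    proof (cases "fst x < 1")
      case True
      then have "x \<in> ?U" using x assms by auto
      then have "isCont (gfun as) x" using cU oU continuous_on_eq_continuous_at by blast
      then show ?thesis by (rule continuous_at_imp_continuous_within)
    next
      case False
      then have x1: "fst x = 1" using x by auto
      have g0: "gfun as x = 0" unfolding gfun_def using x1 by simp
      have ev: "eventually (\<lambda>q. norm (gfun as q) \<le> 2 * \<bar>1 - fst q\<bar>) (at x within ?T)"
        unfolding eventually_at_filter
      proof (rule always_eventually, intro allI impI)
        fix q :: "real \<times> real \<times> complex" assume q: "q \<in> ?T"
        have "cmod (snd (snd q) - cis (phi (fst q) (as + fst (snd q)))) \<le> cmod (snd (snd q)) + cmod (cis (phi (fst q) (as + fst (snd q))))"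
          by (rule norm_triangle_ineq4)
        also have "\<dots> = 2" using q by auto
        finally have "cmod (snd (snd q) - cis (phi (fst q) (as + fst (snd q)))) \<le> 2" .
        then show "norm (gfun as q) \<le> 2 * \<bar>1 - fst q\<bar>"
          unfolding gfun_def by (simp add: abs_mult) (metis abs_ge_zero mult.commute mult_left_mono)
      qed
      have lim: "((\<lambda>q. 2 * \<bar>1 - fst q\<bar>) \<longlongrightarrow> 0) (at x within ?T)"
      proof -
        have "((\<lambda>q. 2 * \<bar>1 - fst q\<bar>) \<longlongrightarrow> 2 * \<bar>1 - fst x\<bar>) (at x within ?T)"
          by (intro tendsto_intros)
        then show ?thesis using x1 by simp
      qed
      have "(gfun as \<longlongrightarrow> 0) (at x within ?T)" by (rule Lim_null_comparison[OF ev lim])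
      then show ?thesis unfolding continuous_within g0 .
    qed
  qed
qed

lemma S_compact:
  assumes "compact J" "\<forall>a\<in>J. as + a \<noteq> 0"
  shows "compact {p \<in> {0..1} \<times> (J \<times> sphere 0 1). gfun as p = 0}"
proof -
  have cT: "compact ({0..1::real} \<times> (J \<times> sphere (0::complex) 1))"
    by (intro compact_Times compact_sphere assms(1) compact_Icc)
  have "closed {p \<in> {0..1} \<times> (J \<times> sphere 0 1). gfun as p = 0}"
    by (rule continuous_closed_preimage_constant[OF gfun_cont[OF assms(2)] compact_imp_closed[OF cT]])
  moreover have "bounded {p \<in> {0..1} \<times> (J \<times> sphere 0 1). gfun as p = 0}"
    using compact_imp_bounded[OF cT] bounded_subset by (metis (no_types, lifting) mem_Collect_eq subsetI)
  ultimately show ?thesis using compact_eq_bounded_closed by blast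
qed



lemma right_bound:
  assumes "compact J" "\<forall>a\<in>J. as + a \<noteq> 0" "\<forall>y \<in> {0..<1}. \<forall>a \<in> J. det (FR as P y a) \<noteq> 0"
  shows "\<exists>B. \<forall>y\<in>{0..<1}. \<forall>a\<in>J. \<forall>k l. (l = 3 \<or> l = 4) \<longrightarrow> \<bar>matrix_inv (FR as P y a) $ k $ l\<bar> \<le> B * (1 - y)^2"
proof -
  let ?T = "{0..1::real} \<times> (J \<times> sphere (0::complex) 1)"
  let ?S = "{p \<in> ?T. gfun as p = 0}"
  let ?N = "\<lambda>p. NR as P (fst p) (fst (snd p)) (snd (snd p))"
  let ?s = "\<lambda>y i. if i = 3 \<or> i = 4 then 1 / (1 - y)^2 else (1::real)"
  have key: "invertible (NR as P y a (cis (phi y (as + a))))" if y: "0 \<le> y" "y < 1" and a: "a \<in> J" for y a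
  proof -
    have al: "as + a \<noteq> 0" using assms(2) a by blast
    have F: "FR as P y a = (\<chi> i j. ?s y i * NR as P y a (cis (phi y (as + a))) $ i $ j * 1)"
      using FR_NR[OF y(2) al] .
    have "NR as P y a (cis (phi y (as + a))) = (\<chi> i j. (1 / ?s y i) * FR as P y a $ i $ j * 1)"
      unfolding F using y by (simp add: vec_eq_iff)
    moreover have "invertible (FR as P y a)" using assms(3) y a by (simp add: invertible_det_nz)
    ultimately show ?thesis using matrix_inv_scale(2)[of "FR as P y a" "\<lambda>i. 1 / ?s y i" "\<lambda>_. 1"] y
      by simp
  qed
  have inv: "invertible (?N p)" if p: "p \<in> ?S" for p
  proof -
    obtain y a z where pe: "p = (y, a, z)" by (metis prod.exhaust)
    have y: "0 \<le> y" "y \<le> 1" and a: "a \<in> J" and z: "cmod z = 1" using p pe by auto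
    show ?thesis
    proof (cases "y = 1")
      case True
      then show ?thesis using NR_at1[of as a z P] assms(2) a z pe by auto
    next
      case False
      then have "gfun as p = 0" "1 - y \<noteq> 0" using p by auto
      then have "z = cis (phi y (as + a))" unfolding gfun_def pe by simp
      then show ?thesis using key[of y a] y a False pe by auto
    qed
  qed
  obtain B where B: "\<forall>p\<in>?S. \<forall>k l. \<bar>matrix_inv (?N p) $ k $ l\<bar> \<le> B"
  proof -
    have "continuous_on ?S ?N"
      by (rule continuous_on_subset[OF NR_cont[OF assms(2), of P]]) auto
    then show ?thesis using bounded_inverse[of ?S ?N] S_compact[OF assms(1,2)] inv that by blast
  qed
  have "\<bar>matrix_inv (FR as P y a) $ k $ l\<bar> \<le> B * (1 - y)^2"
    if y: "0 \<le> y" "y < 1" and a: "a \<in> J" and l: "l = 3 \<or> l = 4" for y a k l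
  proof -
    have al: "as + a \<noteq> 0" using assms(2) a by blast
    let ?z = "cis (phi y (as + a))"
    have pS: "(y, a, ?z) \<in> ?S" using y a unfolding gfun_def by simp
    have F: "FR as P y a = (\<chi> i j. ?s y i * NR as P y a ?z $ i $ j * 1)"
      using FR_NR[OF y(2) al] .
    have "matrix_inv (FR as P y a) $ k $ l = matrix_inv (NR as P y a ?z) $ k $ l * (1 - y)^2"
      unfolding F using matrix_inv_scale(1)[OF key[OF y a], of "?s y" "\<lambda>_. 1"] y l by auto
    then show ?thesis using B pS y by (auto simp: abs_mult intro!: mult_right_mono)
  qed
  then show ?thesis by (intro exI[of _ B]) auto
qed



definition L12 :: "complex \<Rightarrow> complex poly \<Rightarrow> complex \<Rightarrow> complex" where
  "L12 k q w = k + (1 + w) * poly q w"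
definition L12d :: "complex poly \<Rightarrow> complex \<Rightarrow> complex" where
  "L12d q w = poly q w + (1 + w) * poly (pderiv q) w"
definition L34 :: "complex poly \<Rightarrow> complex \<Rightarrow> complex" where
  "L34 q w = 1 / (1 + w) * (1 + (1 + w) * poly q w)"
definition L34d :: "complex poly \<Rightarrow> complex \<Rightarrow> complex" where
  "L34d q w = - 1 / (1 + w)^2 + poly (pderiv q) w"

lemma L12_deriv: "(L12 k q has_field_derivative L12d q w) (at w)"
  unfolding L12_def L12d_def
  by (rule derivative_eq_intros refl | simp)+

lemma L34_deriv: assumes "1 + w \<noteq> 0" shows "(L34 q has_field_derivative L34d q w) (at w)"
proof -
  have "((\<lambda>w. 1 / (1 + w) + poly q w) has_field_derivative L34d q w) (at w)"
    unfolding L34d_def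
    apply (rule derivative_eq_intros refl | (use assms in simp; fail))+
    using assms by (simp add: field_simps power2_eq_square)
  then show ?thesis
  proof (rule has_field_derivative_transform_within_open[where S="{w. 1 + w \<noteq> 0}"])
    show "open {w::complex. 1 + w \<noteq> 0}" by (intro open_Collect_neq continuous_intros)
    show "w \<in> {w. 1 + w \<noteq> 0}" using assms by simp
    show "1 / (1 + x) + poly q x = L34 q x" if "x \<in> {w. 1 + w \<noteq> 0}" for x
      using that unfolding L34_def by (simp add: field_simps)
  qed
qed

definition NL :: "(nat \<Rightarrow> complex poly) \<Rightarrow> real \<Rightarrow> real^4^4" where
  "NL Q y = (let v = complex_of_real (1 + y); w = complex_of_real y in
     mkM (sel4 (1 + v * poly (Q 1) w) (\<i> + v * poly (Q 2) w) (1 + v * poly (Q 3) w) (\<i> * (1 + v * poly (Q 4) w)))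
         (sel4 (v * (poly (Q 1) w + v * poly (pderiv (Q 1)) w)) (v * (poly (Q 2) w + v * poly (pderiv (Q 2)) w))
               (-1 + v^2 * poly (pderiv (Q 3)) w) (\<i> * (-1 + v^2 * poly (pderiv (Q 4)) w))))"

lemma FL_NL: assumes "-1 < y"
  shows "FL Q y = (\<chi> i j. (if i = 3 \<or> i = 4 then 1 / (1 + y) else 1) * NL Q y $ i $ j * (if j = 3 \<or> j = 4 then 1 / (1 + y) else 1))"
proof -
  have r: "1 + y \<noteq> 0" using assms by simp
  have e: "1 + complex_of_real y = of_real (1 + y)" by simp
  have v: "complex_of_real y + 1 \<noteq> 0" "1 + complex_of_real y \<noteq> 0" "1 + y \<noteq> 0"
    using r e of_real_eq_0_iff by (metis add.commute)+
  have d1: "(gL1 Q has_vector_derivative L12d (Q 1) (of_real y)) (at y)"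
    using has_vector_derivative_real_field[OF L12_deriv, of 1 "Q 1" y UNIV]
    unfolding gL1_def L12_def by simp
  have d2: "(gL2 Q has_vector_derivative L12d (Q 2) (of_real y)) (at y)"
    using has_vector_derivative_real_field[OF L12_deriv, of \<i> "Q 2" y UNIV]
    unfolding gL2_def L12_def by simp
  have d3: "(gL3 Q has_vector_derivative L34d (Q 3) (of_real y)) (at y)"
    using has_vector_derivative_real_field[OF L34_deriv[of "of_real y" "Q 3", OF v(2)]]
    unfolding gL3_def L34_def by simp
  have d4: "(gL4 Q has_vector_derivative \<i> * L34d (Q 4) (of_real y)) (at y)"
    using has_vector_derivative_mult_right[OF has_vector_derivative_real_field[OF L34_deriv[of "of_real y" "Q 4", OF v(2)]], of \<i>]
    unfolding gL4_def L34_def by simp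
  let ?v = "complex_of_real (1 + y)"
  let ?w = "complex_of_real y"
  have vv: "?v \<noteq> 0" using r of_real_eq_0_iff by blast
  have vals: "sel4 (gL1 Q y) (gL2 Q y) (gL3 Q y) (gL4 Q y) = sel4 (1 + ?v * poly (Q 1) ?w) (\<i> + ?v * poly (Q 2) ?w)
      ((1 + ?v * poly (Q 3) ?w) / ?v) ((\<i> * (1 + ?v * poly (Q 4) ?w)) / ?v)"
    unfolding gL1_def gL2_def gL3_def gL4_def by simp
  have ders: "sel4 (L12d (Q 1) ?w) (L12d (Q 2) ?w) (L34d (Q 3) ?w) (\<i> * L34d (Q 4) ?w) =
     sel4 ((?v * (poly (Q 1) ?w + ?v * poly (pderiv (Q 1)) ?w)) / ?v) ((?v * (poly (Q 2) ?w + ?v * poly (pderiv (Q 2)) ?w)) / ?v)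
       ((-1 + ?v^2 * poly (pderiv (Q 3)) ?w) / ?v^2) ((\<i> * (-1 + ?v^2 * poly (pderiv (Q 4)) ?w)) / ?v^2)"
  proof -
    have "L12d (Q k) ?w = (?v * (poly (Q k) ?w + ?v * poly (pderiv (Q k)) ?w)) / ?v" for k
      unfolding L12d_def using vv by simp
    moreover have "L34d (Q k) ?w = (-1 + ?v^2 * poly (pderiv (Q k)) ?w) / ?v^2" for k
      unfolding L34d_def using vv v by (simp add: field_simps)
    ultimately show ?thesis by (simp del: of_real_add)
  qed
  show ?thesis
    unfolding FL_def fundmat_mkM[OF d1 d2 d3 d4] NL_def Let_def vals ders
    using r by (simp add: mkM_def vec_eq_iff forall_4 sel4_def power2_eq_square del: of_real_add)
qed



lemma NL_cont: "continuous_on S (NL Q)"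
  unfolding NL_def Let_def
  by (intro mkM_cont sel4_cont continuous_intros)

lemma NL_m1: "invertible (NL Q (-1))"
proof -
  have N: "NL Q (-1) = (\<chi> i j. if i = j \<and> (i = 1 \<or> i = 2) then 1 else if i = j then -1
      else if (i = 1 \<and> j = 3) \<or> (i = 2 \<and> j = 4) then 1 else 0)"
    unfolding NL_def Let_def mkM_def by (simp add: vec_eq_iff forall_4 sel4_def)
  have "NL Q (-1) ** NL Q (-1) = mat 1"
    unfolding N by (simp add: vec_eq_iff forall_4 matrix_matrix_mult_def sum_4 mat_def)
  then show ?thesis using matrix_inv_unique(2) by blast
qed

lemma left_bound:
  assumes "\<forall>y \<in> {-1<..0}. det (FL Q y) \<noteq> 0"
  shows "\<exists>B. \<forall>y\<in>{-1<..0}. \<forall>k l. (l = 3 \<or> l = 4) \<longrightarrow> \<bar>matrix_inv (FL Q y) $ k $ l\<bar> \<le> B * (1 + y)"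
proof -
  let ?s = "\<lambda>y i. if i = 3 \<or> i = 4 then 1 / (1 + y) else (1::real)"
  have key: "invertible (NL Q y)" if y: "-1 < y" "y \<le> 0" for y
  proof -
    have F: "FL Q y = (\<chi> i j. ?s y i * NL Q y $ i $ j * ?s y j)" using FL_NL[OF y(1)] .
    have "NL Q y = (\<chi> i j. (1 / ?s y i) * FL Q y $ i $ j * (1 / ?s y j))"
      unfolding F using y by (simp add: vec_eq_iff)
    moreover have "invertible (FL Q y)" using assms y by (simp add: invertible_det_nz)
    ultimately show ?thesis using matrix_inv_scale(2)[of "FL Q y" "\<lambda>i. 1 / ?s y i" "\<lambda>i. 1 / ?s y i"] y
      by simp
  qed
  have inv: "invertible (NL Q y)" if "y \<in> {-1..0}" for y
    using that key NL_m1 by (cases "y = -1") auto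
  obtain B where B: "\<forall>y\<in>{-1..0}. \<forall>k l. \<bar>matrix_inv (NL Q y) $ k $ l\<bar> \<le> B"
    using bounded_inverse[of "{-1..0::real}" "NL Q"] NL_cont inv by blast
  have "\<bar>matrix_inv (FL Q y) $ k $ l\<bar> \<le> B * (1 + y)"
    if y: "-1 < y" "y \<le> 0" and l: "l = 3 \<or> l = 4" for y k l
  proof -
    have F: "FL Q y = (\<chi> i j. ?s y i * NL Q y $ i $ j * ?s y j)" using FL_NL[OF y(1)] .
    have e: "matrix_inv (FL Q y) $ k $ l = matrix_inv (NL Q y) $ k $ l * (1 + y) / ?s y k"
      unfolding F using matrix_inv_scale(1)[OF key[OF y], of "?s y" "?s y"] y l by auto
    have t: "0 < 1 / ?s y k" "1 / ?s y k \<le> 1" using y by auto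
    have B0: "0 \<le> B" using B[rule_format, of y k l] y by auto
    have "\<bar>matrix_inv (FL Q y) $ k $ l\<bar> = \<bar>matrix_inv (NL Q y) $ k $ l\<bar> * (1 + y) * (1 / ?s y k)"
      unfolding e using y t by (simp add: abs_mult abs_divide)
    also have "\<dots> \<le> B * (1 + y) * 1"
      using B y t B0 by (intro mult_mono) auto
    finally show ?thesis by simp
  qed
  then show ?thesis by (intro exI[of _ B]) auto
qed



lemma normY_ge:
  assumes "g \<in> Yspace" "y \<in> {-1<..<1}"
  shows "(1 + y) * (1 - y)^2 * cmod (g y) \<le> normY g"
proof -
  obtain h where h: "continuous_on {-1..1} h" "\<forall>y \<in> {-1<..<1}. h y = of_real ((1 + y) * (1 - y)^2) * g y"
    using assms(1) unfolding Yspace_def by blast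
  have "bounded (h ` {-1..1})" using compact_continuous_image[OF h(1)] compact_Icc compact_imp_bounded by blast
  then obtain M where M: "\<forall>y\<in>{-1..1}. cmod (h y) \<le> M" unfolding bounded_iff by auto
  have eq: "cmod (h y) = (1 + y) * (1 - y)^2 * cmod (g y)" if "y \<in> {-1<..<1}" for y
  proof -
    have "cmod (h y) = norm (complex_of_real ((1 + y) * (1 - y)^2)) * cmod (g y)"
      using h(2) that by (simp only: norm_mult)
    also have "norm (complex_of_real ((1 + y) * (1 - y)^2)) = (1 + y) * (1 - y)^2"
      using that by (simp only: norm_of_real) simp
    finally show ?thesis .
  qed
  have "bdd_above ((\<lambda>y. (1 + y) * (1 - y)^2 * cmod (g y)) ` {-1<..<1})"
  proof (intro bdd_aboveI[of _ M])
    fix x assume "x \<in> (\<lambda>y. (1 + y) * (1 - y)^2 * cmod (g y)) ` {-1<..<1}"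
    then obtain y where y: "y \<in> {-1<..<1}" "x = (1 + y) * (1 - y)^2 * cmod (g y)" by blast
    have "cmod (h y) \<le> M" using M y(1) by auto
    then show "x \<le> M" using eq[OF y(1)] y(2) by simp
  qed
  then show ?thesis unfolding normY_def using assms(2) by (rule cSUP_upper2) simp
qed

lemma cont_mult_const: "continuous_on S M \<Longrightarrow> continuous_on S (\<lambda>a. (C :: real^'n^'n) ** M a)"
  unfolding matrix_matrix_mult_def by (intro continuous_intros continuous_on_vec_lambda) auto

lemma FR0: assumes "as + a \<noteq> 0" shows "FR as P 0 a = NR as P 0 a 1"
proof -
  have "phi 0 (as + a) = 0" unfolding phi_def by simp
  then show ?thesis using FR_NR[of 0 as a P] assms by (simp add: vec_eq_iff)
qed

lemma MF_bound:
  assumes "compact J" "\<forall>a\<in>J. as + a \<noteq> 0" "\<forall>a \<in> J. det (FR as P 0 a) \<noteq> 0" "det (FL Q 0) \<noteq> 0"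
  shows "\<exists>B. \<forall>a\<in>J. invertible (MF as P Q a) \<and> (\<forall>k l. \<bar>matrix_inv (MF as P Q a) $ k $ l\<bar> \<le> B)"
proof -
  have iFL: "invertible (FL Q 0)" using assms(4) by (simp add: invertible_det_nz)
  have iFLi: "invertible (matrix_inv (FL Q 0))"
    using matrix_inv_props(1)[OF iFL] invertible_left_inverse by blast
  have inv: "invertible (MF as P Q a)" if "a \<in> J" for a
  proof -
    have "invertible (FR as P 0 a)" using assms(3) that by (simp add: invertible_det_nz)
    then show ?thesis unfolding MF_def using invertible_mult[OF iFLi] by blast
  qed
  have c1: "continuous_on J (\<lambda>a. NR as P (fst (0::real, a, 1::complex)) (fst (snd (0::real, a, 1::complex))) (snd (snd (0::real, a, 1::complex))))"
    by (rule continuous_on_compose2[OF NR_cont[OF assms(2), of P], of J "\<lambda>a. (0, a, 1)"])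
      (auto intro!: continuous_intros)
  have "continuous_on J (\<lambda>a. matrix_inv (FL Q 0) ** NR as P 0 a 1)"
    using c1 by (intro cont_mult_const) simp
  then have "continuous_on J (MF as P Q)"
    by (rule continuous_on_eq) (use assms(2) FR0 in \<open>auto simp: MF_def\<close>)
  then obtain B where "\<forall>a\<in>J. \<forall>k l. \<bar>matrix_inv (MF as P Q a) $ k $ l\<bar> \<le> B"
    using bounded_inverse[of J "MF as P Q"] assms(1) inv by blast
  then show ?thesis using inv by blast
qed



lemma prod_bound:
  fixes a b :: "real" assumes "\<bar>a\<bar> \<le> A" "\<bar>b\<bar> \<le> Bb" shows "\<bar>a * b\<bar> \<le> A * Bb"
  unfolding abs_mult using assms by (intro mult_mono) auto

theorem lemma3p24:
  fixes as :: real and J :: "real set" and P Q :: "nat \<Rightarrow> complex poly"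
  assumes "admissible as J P Q"
  shows "\<exists>C > 0. \<forall>a \<in> J. \<forall>g \<in> Yspace. \<forall>k :: 4.
           (\<forall>y \<in> {-1<..<1}. \<bar>alphaF as P Q k a g y\<bar> \<le> C * normY g)"
proof -
  have cJ: "compact J" and nJ: "\<forall>a\<in>J. as + a \<noteq> 0"
    and dR: "\<forall>y \<in> {0..<1}. \<forall>a \<in> J. det (FR as P y a) \<noteq> 0"
    and dL: "\<forall>y \<in> {-1<..0}. det (FL Q y) \<noteq> 0"
    using assms unfolding admissible_def by (auto simp: add_eq_0_iff2 minus_equation_iff)
  obtain BR where BR: "\<forall>y\<in>{0..<1}. \<forall>a\<in>J. \<forall>k l. (l = 3 \<or> l = 4) \<longrightarrow> \<bar>matrix_inv (FR as P y a) $ k $ l\<bar> \<le> BR * (1 - y)^2"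
    using right_bound[OF cJ nJ dR] by blast
  obtain BL where BL: "\<forall>y\<in>{-1<..0}. \<forall>k l. (l = 3 \<or> l = 4) \<longrightarrow> \<bar>matrix_inv (FL Q y) $ k $ l\<bar> \<le> BL * (1 + y)"
    using left_bound[OF dL] by blast
  obtain BM where BM: "\<forall>a\<in>J. invertible (MF as P Q a) \<and> (\<forall>k l. \<bar>matrix_inv (MF as P Q a) $ k $ l\<bar> \<le> BM)"
    using MF_bound[OF cJ nJ, of P Q] dR dL by auto
  define BM' where "BM' = max 0 BM"
  define BL' where "BL' = max 0 BL"
  define K where "K = max 0 (max BR (4 * BM' * BL'))"
  have K0: "0 \<le> K" unfolding K_def by simp
  have main: "\<bar>matrix_inv (Ffund as P Q y a) $ k $ l\<bar> \<le> K * ((1 + y) * (1 - y)^2)"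
    if y: "-1 < y" "y < 1" and a: "a \<in> J" and l: "l = 3 \<or> l = 4" for y a k l
  proof (cases "y \<le> 0")
    case True
    have iFL: "invertible (FL Q y)" using dL y True by (simp add: invertible_det_nz)
    have iM: "invertible (MF as P Q a)" using BM a by blast
    have "matrix_inv (Ffund as P Q y a) $ k $ l = (matrix_inv (MF as P Q a) ** matrix_inv (FL Q y)) $ k $ l"
      unfolding Ffund_def using True matrix_inv_mult[OF iFL iM] by simp
    also have "\<dots> = (\<Sum>m\<in>UNIV. matrix_inv (MF as P Q a) $ k $ m * matrix_inv (FL Q y) $ m $ l)"
      by (simp add: matrix_matrix_mult_def)
    finally have e: "matrix_inv (Ffund as P Q y a) $ k $ l = (\<Sum>m\<in>UNIV. matrix_inv (MF as P Q a) $ k $ m * matrix_inv (FL Q y) $ m $ l)" .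
    have tb: "\<bar>matrix_inv (MF as P Q a) $ k $ m * matrix_inv (FL Q y) $ m $ l\<bar> \<le> BM' * (BL' * (1 + y))" for m
    proof (rule prod_bound)
      have "\<bar>matrix_inv (MF as P Q a) $ k $ m\<bar> \<le> BM" using BM a by blast
      then show "\<bar>matrix_inv (MF as P Q a) $ k $ m\<bar> \<le> BM'" unfolding BM'_def by simp
      have "\<bar>matrix_inv (FL Q y) $ m $ l\<bar> \<le> BL * (1 + y)" using BL y True l by auto
      also have "\<dots> \<le> BL' * (1 + y)" unfolding BL'_def using y by (intro mult_right_mono) auto
      finally show "\<bar>matrix_inv (FL Q y) $ m $ l\<bar> \<le> BL' * (1 + y)" .
    qed
    have "\<bar>matrix_inv (Ffund as P Q y a) $ k $ l\<bar> \<le> (\<Sum>m\<in>(UNIV::4 set). BM' * (BL' * (1 + y)))"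
      unfolding e by (rule order_trans[OF sum_abs sum_mono]) (rule tb)
    also have "\<dots> = (4 * BM' * BL') * (1 + y)" by (simp add: sum_4)
    also have "\<dots> \<le> K * (1 + y)" unfolding K_def using y by (intro mult_right_mono) auto
    also have "\<dots> \<le> K * ((1 + y) * (1 - y)^2)"
    proof -
      have "1 \<le> (1 - y)^2" using True by (intro one_le_power) simp
      then have "(1 + y) * 1 \<le> (1 + y) * (1 - y)^2" using y by (intro mult_left_mono) auto
      then show ?thesis using K0 by (intro mult_left_mono) auto
    qed
    finally show ?thesis .
  next
    case False
    have "matrix_inv (Ffund as P Q y a) = matrix_inv (FR as P y a)" unfolding Ffund_def using False by simp
    then have "\<bar>matrix_inv (Ffund as P Q y a) $ k $ l\<bar> \<le> BR * (1 - y)^2" using BR False y a l by auto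
    also have "\<dots> \<le> K * (1 - y)^2" unfolding K_def by (intro mult_right_mono) auto
    also have "\<dots> \<le> K * ((1 + y) * (1 - y)^2)"
    proof -
      have "1 * (1 - y)^2 \<le> (1 + y) * (1 - y)^2" using False by (intro mult_right_mono) auto
      then show ?thesis using K0 by (intro mult_left_mono) auto
    qed
    finally show ?thesis .
  qed
  show ?thesis
  proof (intro exI[of _ "2 * K + 1"] conjI ballI allI)
    show "0 < 2 * K + 1" using K0 by simp
    fix a g and k :: 4 and y :: real assume a: "a \<in> J" and g: "g \<in> Yspace" and y: "y \<in> {-1<..<1}"
    let ?w = "(1 + y) * (1 - y)^2"
    have w0: "0 \<le> ?w" using y by auto
    have "cmod (g 0) \<le> normY g" using normY_ge[OF g, of 0] by simp
    then have n0: "0 \<le> normY g" using norm_ge_zero[of "g 0"] by linarith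
    have "\<bar>alphaF as P Q k a g y\<bar> \<le> \<bar>matrix_inv (Ffund as P Q y a) $ k $ 3\<bar> * \<bar>Re (g y)\<bar> + \<bar>matrix_inv (Ffund as P Q y a) $ k $ 4\<bar> * \<bar>Im (g y)\<bar>"
      unfolding alphaF_def abs_mult[symmetric] by (rule abs_triangle_ineq)
    also have "\<dots> \<le> (K * ?w) * cmod (g y) + (K * ?w) * cmod (g y)"
    proof (rule add_mono)
      have m3: "\<bar>matrix_inv (Ffund as P Q y a) $ k $ 3\<bar> \<le> K * ?w" using main[of y a 3 k] y a by simp
      have m4: "\<bar>matrix_inv (Ffund as P Q y a) $ k $ 4\<bar> \<le> K * ?w" using main[of y a 4 k] y a by simp
      show "\<bar>matrix_inv (Ffund as P Q y a) $ k $ 3\<bar> * \<bar>Re (g y)\<bar> \<le> (K * ?w) * cmod (g y)"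
        by (rule mult_mono[OF m3 abs_Re_le_cmod]) (use K0 w0 in auto)
      show "\<bar>matrix_inv (Ffund as P Q y a) $ k $ 4\<bar> * \<bar>Im (g y)\<bar> \<le> (K * ?w) * cmod (g y)"
        by (rule mult_mono[OF m4 abs_Im_le_cmod]) (use K0 w0 in auto)
    qed
    also have "\<dots> = 2 * K * (?w * cmod (g y))" by simp
    also have "\<dots> \<le> 2 * K * normY g" using normY_ge[OF g y] K0 by (intro mult_left_mono) auto
    also have "\<dots> \<le> (2 * K + 1) * normY g" using n0 by (simp add: distrib_right)
    finally show "\<bar>alphaF as P Q k a g y\<bar> \<le> (2 * K + 1) * normY g" .
  qed
qed

end
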